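(* For all integers $k\ge 1$ and $t\ge 1$, $$B_0(k+1,2t+1)+B_1(k,2t)=B_1(k,2t-2k)+p_{de}(2t-k).$$
   Context: For a partition $\pi$, $s(\pi)$ is its smallest part. For $j\ge1$, $\mathrm{Spt}j_{do}(n)$ is the set of partitions $\pi$ of $n$ in which $s(\pi)$ occurs exactly $j$ times and the remaining parts (those larger than $s(\pi)$) are pairwise distinct and each has parity different from that of $s(\pi)$. $B_0(j,n)$ (resp. $B_1(j,n)$) is the number of $\pi\in\mathrm{Spt}j_{do}(n)$ whose number of parts greater than $s(\pi)$ is even (resp. odd); $B_0(j,n)=B_1(j,n)=0$ for $n\le 0$. $p_{de}(n)$ is the number of partitions of $n$ into distinct even parts, with $p_{de}(0)=1$ and $p_{de}(n)=0$ for $n<0$. *)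

theory Defs
  imports Main "HOL-Library.Multiset"
begin

definition partitions :: "nat \<Rightarrow> nat multiset set" where
  "partitions n = {p. (\<forall>x\<in>#p. 0 < x) \<and> sum_mset p = n}"

definition spart :: "nat multiset \<Rightarrow> nat" where
  "spart p = Min_mset p"

definition Sptj_do :: "nat \<Rightarrow> nat \<Rightarrow> nat multiset set" where
  "Sptj_do j n = {p \<in> partitions n. p \<noteq> {#} \<and>
       count p (spart p) = j \<and>
       (\<forall>x\<in>#p. spart p < x \<longrightarrow> count p x = 1 \<and> (even x \<longleftrightarrow> odd (spart p)))}"

definition larger_parts :: "nat multiset \<Rightarrow> nat" where
  "larger_parts p = size (filter_mset (\<lambda>x. spart p < x) p)"

definition B0 :: "nat \<Rightarrow> int \<Rightarrow> nat" where
  "B0 j n = (if n \<le> 0 then 0 else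
     card {p \<in> Sptj_do j (nat n). even (larger_parts p)})"

definition B1 :: "nat \<Rightarrow> int \<Rightarrow> nat" where
  "B1 j n = (if n \<le> 0 then 0 else
     card {p \<in> Sptj_do j (nat n). odd (larger_parts p)})"

definition p_de :: "int \<Rightarrow> nat" where
  "p_de n = (if n < 0 then 0 else
     card {p \<in> partitions (nat n). \<forall>x\<in>#p. even x \<and> count p x = 1})"

end

theory Submission
  imports Defs
begin

definition phi :: "nat \<Rightarrow> nat \<Rightarrow> nat set \<Rightarrow> nat multiset" where
  "phi j s D = replicate_mset j s + mset_set D"

definition QQ :: "nat \<Rightarrow> nat \<Rightarrow> (nat \<times> nat set) set" where
  "QQ j n = {(s,D). 0 < s \<and> finite D \<and> (\<forall>x\<in>D. s < x \<and> (even x \<longleftrightarrow> odd s)) \<and> j*s + sum id D = n}"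

lemma sum_mset_mset_set: "sum_mset (mset_set D) = sum id (D::nat set)"
  by (simp add: sum_unfold_sum_mset)

lemma phi_props:
  assumes j: "j \<ge> 1" and fin: "finite D" and gt: "\<forall>x\<in>D. s < x"
  shows "set_mset (phi j s D) = insert s D"
    and "spart (phi j s D) = s"
    and "count (phi j s D) s = j"
    and "\<And>x. x \<in> D \<Longrightarrow> count (phi j s D) x = 1"
    and "sum_mset (phi j s D) = j*s + sum id D"
    and "filter_mset (\<lambda>x. s < x) (phi j s D) = mset_set D"
    and "larger_parts (phi j s D) = card D"
proof -
  show S: "set_mset (phi j s D) = insert s D"
    using j fin by (auto simp: phi_def)
  show sp: "spart (phi j s D) = s"
    unfolding spart_def S using fin gt
    by (metis Min_insert2 finite_insert insertCI less_imp_le)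
  show "count (phi j s D) s = j" using fin gt by (auto simp: phi_def)
  show "\<And>x. x \<in> D \<Longrightarrow> count (phi j s D) x = 1" using fin gt by (auto simp: phi_def)
  show "sum_mset (phi j s D) = j*s + sum id D" by (simp add: phi_def sum_mset_mset_set)
  have "{x \<in> D. s < x} = D" using gt by auto
  then show F: "filter_mset (\<lambda>x. s < x) (phi j s D) = mset_set D"
    using fin by (simp add: phi_def)
  show "larger_parts (phi j s D) = card D"
    unfolding larger_parts_def sp F by simp
qed

lemma spt_bij:
  assumes j: "j \<ge> 1"
  shows "card {p \<in> Sptj_do j n. R (larger_parts p)} = card {(s,D) \<in> QQ j n. R (card D)}"
proof -
  let ?A = "{(s,D) \<in> QQ j n. R (card D)}"
  let ?B = "{p \<in> Sptj_do j n. R (larger_parts p)}"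
  let ?f = "\<lambda>(s,D). phi j s D"
  let ?g = "\<lambda>p. (spart p, set_mset (filter_mset (\<lambda>x. spart p < x) p))"
  have inv: "p = phi j (spart p) (set_mset (filter_mset (\<lambda>x. spart p < x) p))"
    if p: "p \<in> Sptj_do j n" for p
  proof -
    let ?s = "spart p" let ?D = "set_mset (filter_mset (\<lambda>x. spart p < x) p)"
    from p have ne: "p \<noteq> {#}" and cs: "count p ?s = j"
      and one: "\<forall>x\<in>#p. ?s < x \<longrightarrow> count p x = 1"
      by (auto simp: Sptj_do_def)
    have mn: "x \<in># p \<Longrightarrow> ?s \<le> x" for x using ne unfolding spart_def by simp
    show ?thesis
    proof (rule multiset_eqI)
      fix x
      show "count p x = count (phi j ?s ?D) x"
      proof (cases "x = ?s")
        case True then show ?thesis using cs by (simp add: phi_def)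
      next
        case False
        show ?thesis
        proof (cases "x \<in># p")
          case True
          have "?s \<le> x" using mn True by blast
          with False have "?s < x" by simp
          then show ?thesis using one True False by (auto simp: phi_def)
        next
          case f2: False
          then show ?thesis using False by (auto simp: phi_def count_eq_zero_iff)
        qed
      qed
    qed
  qed
  have "bij_betw ?f ?A ?B"
  proof (rule bij_betw_byWitness)
    show "\<forall>a\<in>?A. ?g (?f a) = a"
    proof
      fix a assume "a \<in> ?A"
      then obtain s D where a: "a = (s,D)" and "finite D" "\<forall>x\<in>D. s < x"
        by (auto simp: QQ_def)
      then show "?g (?f a) = a" using phi_props[OF j] by simp
    qed
    show "\<forall>a\<in>?B. ?f (?g a) = a" using inv by auto
    show "?f ` ?A \<subseteq> ?B"
    proof
      fix p assume "p \<in> ?f ` ?A"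
      then obtain s D where p: "p = phi j s D" and s0: "0 < s" and fin: "finite D"
        and D: "\<forall>x\<in>D. s < x \<and> (even x \<longleftrightarrow> odd s)" and sm: "j*s + sum id D = n"
        and R: "R (card D)"
        by (auto simp: QQ_def)
      have gt: "\<forall>x\<in>D. s < x" using D by auto
      note P = phi_props[OF j fin gt]
      show "p \<in> ?B"
        unfolding p Sptj_do_def partitions_def
        using P s0 D sm R gt by auto
    qed
    show "?g ` ?B \<subseteq> ?A"
    proof
      fix a assume "a \<in> ?g ` ?B"
      then obtain p where pB: "p \<in> ?B" and a: "a = ?g p" by auto
      let ?s = "spart p" let ?D = "set_mset (filter_mset (\<lambda>x. spart p < x) p)"
      have pS: "p \<in> Sptj_do j n" using pB by auto
      have ip: "p = phi j ?s ?D" using inv[OF pS] .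
      have fin: "finite ?D" by simp
      have gt: "\<forall>x\<in>?D. ?s < x" by simp
      note P = phi_props[OF j fin gt]
      from pS have ne: "p \<noteq> {#}" and pos: "\<forall>x\<in>#p. 0 < x" and sm: "sum_mset p = n"
        and par: "\<forall>x\<in>#p. ?s < x \<longrightarrow> (even x \<longleftrightarrow> odd ?s)"
        by (auto simp: Sptj_do_def partitions_def)
      have "?s \<in># p" using ne unfolding spart_def by simp
      with pos have s0: "0 < ?s" by auto
      have e1: "sum_mset p = sum_mset (phi j ?s ?D)" by (rule arg_cong[OF ip])
      have e2: "larger_parts p = larger_parts (phi j ?s ?D)" by (rule arg_cong[OF ip])
      have "j * ?s + sum id ?D = n" using sm e1 P(5) by simp
      moreover have "R (card ?D)" using pB e2 P(7) by simp
      ultimately show "a \<in> ?A" using a s0 par by (auto simp: QQ_def)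
    qed
  qed
  then show ?thesis by (simp add: bij_betw_same_card)
qed

lemma sum_par:
  assumes "finite D" "\<forall>x\<in>D. even x \<longleftrightarrow> odd (s::nat)"
  shows "even (sum id D) \<longleftrightarrow> (odd s \<or> even (card D))"
proof (cases "odd s")
  case True
  then have eq: "{a\<in>D. odd (id a)} = {}" using assms(2) by auto
  have e: "even (sum id D) \<longleftrightarrow> even (card {a\<in>D. odd (id a)})" by (rule even_sum_iff[OF assms(1)])
  show ?thesis using True by (simp only: e eq) simp
next
  case False
  then have eq: "{a\<in>D. odd (id a)} = D" using assms(2) by auto
  have e: "even (sum id D) \<longleftrightarrow> even (card {a\<in>D. odd (id a)})" by (rule even_sum_iff[OF assms(1)])
  show ?thesis using False by (simp only: e eq) simp
qed

lemma x0_odd: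
  assumes "(s,D) \<in> QQ (K+1) (2*T+1)" "even (card D)"
  shows "odd s"
proof -
  from assms have fin: "finite D" and par: "\<forall>x\<in>D. even x \<longleftrightarrow> odd s"
    and sm: "(K+1)*s + sum id D = 2*T+1" by (auto simp: QQ_def)
  have "even (sum id D)" using sum_par[OF fin par] assms(2) by simp
  moreover have "odd ((K+1)*s + sum id D)" by (subst sm) simp
  ultimately have "odd ((K+1)*s)" by simp
  then show ?thesis by (cases "even s") auto
qed

lemma y_odd:
  assumes "(s,D) \<in> QQ K (2*N)" "odd (card D)"
  shows "odd s"
proof (rule ccontr)
  assume ev: "\<not> odd s"
  from assms have fin: "finite D" and par: "\<forall>x\<in>D. even x \<longleftrightarrow> odd s"
    and sm: "K*s + sum id D = 2*N" by (auto simp: QQ_def)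
  have "odd (sum id D)" using sum_par[OF fin par] assms(2) ev by simp
  moreover have "even (K*s)" using ev by simp
  ultimately have "odd (2*N)" using sm by (metis odd_add)
  then show False by simp
qed

lemma QQ_finite:
  assumes "j \<ge> 1" shows "finite (QQ j n)"
proof (rule finite_subset)
  show "QQ j n \<subseteq> {..n} \<times> Pow {..n}"
  proof
    fix a assume "a \<in> QQ j n"
    then obtain s D where a: "a = (s,D)" and fin: "finite D" and sm: "j*s + sum id D = n"
      by (auto simp: QQ_def)
    have "s \<le> j*s" using assms by simp
    then have "s \<le> n" using sm by linarith
    moreover have "x \<le> n" if "x \<in> D" for x
    proof -
      have "id x \<le> sum id D" by (rule member_le_sum) (use that fin in auto)
      then show ?thesis using sm by simp
    qed
    ultimately show "a \<in> {..n} \<times> Pow {..n}" using a by auto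
  qed
  show "finite ({..n} \<times> Pow {..n})" by simp
qed

lemma card_split: "finite A \<Longrightarrow> card A = card {a\<in>A. P a} + card {a\<in>A. \<not> P a}"
  by (subst card_Un_disjoint[symmetric]) (auto intro: arg_cong[where f=card])

lemma QQ_mem: "(s,D) \<in> QQ j n \<longleftrightarrow> 0 < s \<and> finite D \<and> (\<forall>x\<in>D. s < x \<and> (even x \<longleftrightarrow> odd s)) \<and> j*s + sum id D = n"
  by (simp add: QQ_def)

lemma bij1:
  assumes K: "K \<ge> 1"
  shows "card {(s,D)\<in>QQ (K+1) (2*T+1). even (card D) \<and> s \<noteq> 1}
       = card {(s,D)\<in>QQ K (2*T-2*K). odd (card D) \<and> s+1 \<in> D}"
proof -
  let ?A = "{(s,D)\<in>QQ (K+1) (2*T+1). even (card D) \<and> s \<noteq> 1}"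
  let ?B = "{(s,D)\<in>QQ K (2*T-2*K). odd (card D) \<and> s+1 \<in> D}"
  let ?f = "\<lambda>(s,D). (s-2, insert (s-1) D)"
  let ?g = "\<lambda>(s::nat,D). (s+2, D - {s+1})"
  have "bij_betw ?f ?A ?B"
  proof (rule bij_betw_byWitness)
    show "\<forall>a\<in>?A. ?g (?f a) = a"
    proof
      fix a assume "a \<in> ?A"
      then obtain s D where a: "a = (s,D)" and m: "(s,D) \<in> QQ (K+1) (2*T+1)" "even (card D)" "s \<noteq> 1"
        by auto
      have "odd s" using x0_odd[OF m(1,2)] .
      with m(3) have s3: "s \<ge> 3" using m(1) unfolding QQ_mem
        by (metis One_nat_def Suc_leI antisym_conv2 le_less_Suc_eq numeral_3_eq_3 odd_pos dvd_refl even_Suc nat_less_le not_less_eq_eq)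
      have "s - 1 \<notin> D" using m(1) unfolding QQ_mem by fastforce
      moreover have e: "s - 2 + 1 = s - 1" "s - 2 + 2 = s" using s3 by arith+
      ultimately show "?g (?f a) = a" using a by simp
    qed
    show "\<forall>a\<in>?B. ?f (?g a) = a"
    proof
      fix a assume "a \<in> ?B"
      then obtain s D where a: "a = (s,D)" and "s+1 \<in> D" by auto
      then show "?f (?g a) = a" by (auto simp: insert_absorb)
    qed
    show "?f ` ?A \<subseteq> ?B"
    proof
      fix b assume "b \<in> ?f ` ?A"
      then obtain s D where b: "b = ?f (s,D)" and m: "(s,D) \<in> QQ (K+1) (2*T+1)" "even (card D)" "s \<noteq> 1"
        by auto
      have od: "odd s" using x0_odd[OF m(1,2)] .
      from m(1) have s0: "0 < s" and fin: "finite D" and D: "\<forall>x\<in>D. s < x \<and> (even x \<longleftrightarrow> odd s)"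
        and sm: "(K+1)*s + sum id D = 2*T+1" unfolding QQ_mem by auto
      obtain u where u: "s = u + 3" using od m(3) s0
        by (metis add.commute dvd_refl even_Suc le_Suc_ex numeral_3_eq_3 One_nat_def Suc_leI less_Suc_eq_le not_less_eq_eq le_neq_implies_less odd_one)
      have nin: "u + 2 \<notin> D" using D u by fastforce
      have sm2: "(K+1)*(u+3) + sum id D = 2*T+1" using sm u by simp
      have "K * (u+1) + sum id (insert (u+2) D) = 2*T - 2*K"
        using sm2 nin fin by (simp add: algebra_simps)
      moreover have "odd (card (insert (u+2) D))" using nin fin m(2) by simp
      moreover have "\<forall>x\<in>insert (u+2) D. u+1 < x \<and> (even x \<longleftrightarrow> odd (u+1))"
        using D u od by auto
      ultimately show "b \<in> ?B" using b u fin by (simp add: QQ_mem)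
    qed
    show "?g ` ?B \<subseteq> ?A"
    proof
      fix b assume "b \<in> ?g ` ?B"
      then obtain s D where b: "b = ?g (s,D)" and m: "(s,D) \<in> QQ K (2*T-2*K)" "odd (card D)" "s+1 \<in> D"
        by auto
      have "(s,D) \<in> QQ K (2*(T-K))" using m(1) by (simp add: right_diff_distrib')
      from y_odd[OF this m(2)] have od: "odd s" .
      from m(1) have s0: "0 < s" and fin: "finite D" and D: "\<forall>x\<in>D. s < x \<and> (even x \<longleftrightarrow> odd s)"
        and sm: "K*s + sum id D = 2*T - 2*K" unfolding QQ_mem by auto
      have "K*s > 0" using K s0 by simp
      then have T: "2*T - 2*K + 2*K = 2*T" using sm by linarith
      have rm: "sum id D = (s+1) + sum id (D - {s+1})" using sum.remove[OF fin m(3), of id] by simp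
      have "(K+1)*(s+2) + sum id (D - {s+1}) = 2*T+1"
        using sm rm T by (simp add: algebra_simps)
      moreover have "even (card (D - {s+1}))" using m(2,3) fin
        by (simp add: card_Diff_singleton)
      moreover have "\<forall>x\<in>D - {s+1}. s+2 < x \<and> (even x \<longleftrightarrow> odd (s+2))"
      proof
        fix x assume x: "x \<in> D - {s+1}"
        then have "s < x" "even x" using D od by auto
        moreover have "x \<noteq> s+1" "x \<noteq> s+2" using x \<open>even x\<close> od by auto
        ultimately show "s+2 < x \<and> (even x \<longleftrightarrow> odd (s+2))" using od by auto
      qed
      ultimately show "b \<in> ?A" using b fin by (simp add: QQ_mem)
    qed
  qed
  then show ?thesis by (rule bij_betw_same_card)
qed

lemma bij2:
  assumes K: "K \<ge> 1"
  shows "card {(s,D)\<in>QQ K (2*T). odd (card D) \<and> s \<noteq> 1}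
       = card {(s,D)\<in>QQ K (2*T-2*K). odd (card D) \<and> s+1 \<notin> D}"
proof -
  let ?A = "{(s,D)\<in>QQ K (2*T). odd (card D) \<and> s \<noteq> 1}"
  let ?B = "{(s,D)\<in>QQ K (2*T-2*K). odd (card D) \<and> s+1 \<notin> D}"
  let ?f = "\<lambda>(s::nat,D::nat set). (s-2, D)"
  let ?g = "\<lambda>(s::nat,D::nat set). (s+2, D)"
  have "bij_betw ?f ?A ?B"
  proof (rule bij_betw_byWitness)
    show "\<forall>a\<in>?A. ?g (?f a) = a"
    proof
      fix a assume "a \<in> ?A"
      then obtain s D where a: "a = (s,D)" and m: "(s,D) \<in> QQ K (2*T)" "odd (card D)" "s \<noteq> 1"
        by auto
      have od: "odd s" using y_odd[OF m(1,2)] .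
      from m(1) have s0: "0 < s" unfolding QQ_mem by auto
      obtain u where u: "s = u + 3" using od m(3) s0
        by (metis add.commute dvd_refl even_Suc le_Suc_ex numeral_3_eq_3 One_nat_def Suc_leI less_Suc_eq_le not_less_eq_eq le_neq_implies_less odd_one)
      then show "?g (?f a) = a" using a by simp
    qed
    show "\<forall>a\<in>?B. ?f (?g a) = a" by auto
    show "?f ` ?A \<subseteq> ?B"
    proof
      fix b assume "b \<in> ?f ` ?A"
      then obtain s D where b: "b = ?f (s,D)" and m: "(s,D) \<in> QQ K (2*T)" "odd (card D)" "s \<noteq> 1"
        by auto
      have od: "odd s" using y_odd[OF m(1,2)] .
      from m(1) have s0: "0 < s" and fin: "finite D" and D: "\<forall>x\<in>D. s < x \<and> (even x \<longleftrightarrow> odd s)"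
        and sm: "K*s + sum id D = 2*T" unfolding QQ_mem by auto
      obtain u where u: "s = u + 3" using od m(3) s0
        by (metis add.commute dvd_refl even_Suc le_Suc_ex numeral_3_eq_3 One_nat_def Suc_leI less_Suc_eq_le not_less_eq_eq le_neq_implies_less odd_one)
      have nin: "u + 2 \<notin> D" using D u by fastforce
      have sm2: "K*(u+3) + sum id D = 2*T" using sm u by simp
      have "K * (u+1) + sum id D = 2*T - 2*K"
        using sm2 by (simp add: algebra_simps)
      moreover have "\<forall>x\<in>D. u+1 < x \<and> (even x \<longleftrightarrow> odd (u+1))"
        using D u od by auto
      ultimately show "b \<in> ?B" using b u fin m(2) nin by (simp add: QQ_mem)
    qed
    show "?g ` ?B \<subseteq> ?A"
    proof
      fix b assume "b \<in> ?g ` ?B"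
      then obtain s D where b: "b = ?g (s,D)" and m: "(s,D) \<in> QQ K (2*T-2*K)" "odd (card D)" "s+1 \<notin> D"
        by auto
      have "(s,D) \<in> QQ K (2*(T-K))" using m(1) by (simp add: right_diff_distrib')
      from y_odd[OF this m(2)] have od: "odd s" .
      from m(1) have s0: "0 < s" and fin: "finite D" and D: "\<forall>x\<in>D. s < x \<and> (even x \<longleftrightarrow> odd s)"
        and sm: "K*s + sum id D = 2*T - 2*K" unfolding QQ_mem by auto
      have "K*s > 0" using K s0 by simp
      then have T: "2*T - 2*K + 2*K = 2*T" using sm by linarith
      have "K*(s+2) + sum id D = 2*T"
        using sm T by (simp add: algebra_simps)
      moreover have "\<forall>x\<in>D. s+2 < x \<and> (even x \<longleftrightarrow> odd (s+2))"
      proof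
        fix x assume x: "x \<in> D"
        then have "s < x" "even x" using D od by auto
        moreover have "x \<noteq> s+1" "x \<noteq> s+2" using x m(3) \<open>even x\<close> od by auto
        ultimately show "s+2 < x \<and> (even x \<longleftrightarrow> odd (s+2))" using od by auto
      qed
      ultimately show "b \<in> ?A" using b fin m(2) by (simp add: QQ_mem)
    qed
  qed
  then show ?thesis by (rule bij_betw_same_card)
qed

definition WW :: "nat \<Rightarrow> nat \<Rightarrow> nat set set" where
  "WW K T = {D. finite D \<and> (\<forall>x\<in>D. 0 < x \<and> even x) \<and> K + sum id D = 2*T}"

lemma bij3:
  shows "card {(s,D)\<in>QQ (K+1) (2*T+1). even (card D) \<and> s = 1}
       = card {D \<in> WW K T. even (card D)}"
proof -
  let ?A = "{(s,D)\<in>QQ (K+1) (2*T+1). even (card D) \<and> s = 1}"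
  let ?B = "{D \<in> WW K T. even (card D)}"
  have "bij_betw snd ?A ?B"
  proof (rule bij_betw_byWitness[where f'="\<lambda>D. (1,D)"])
    show "\<forall>a\<in>?A. (1, snd a) = a"
    proof
      fix a assume "a \<in> ?A"
      then obtain s D where "a = (s,D)" "s = 1" by blast
      then show "(1, snd a) = a" by simp
    qed
    show "\<forall>a\<in>?B. snd (1::nat, a) = a" by simp
    show "snd ` ?A \<subseteq> ?B"
    proof
      fix D assume "D \<in> snd ` ?A"
      then obtain s where m: "(s,D) \<in> QQ (K+1) (2*T+1)" "even (card D)" "s = 1" by force
      then have "\<forall>x\<in>D. 0 < x \<and> even x" "finite D" "(K+1)*1 + sum id D = 2*T+1" unfolding QQ_mem by auto
      then show "D \<in> ?B" using m(2) by (simp add: WW_def)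
    qed
    show "(\<lambda>D. (1,D)) ` ?B \<subseteq> ?A"
    proof
      fix b assume "b \<in> (\<lambda>D. (1::nat,D)) ` ?B"
      then obtain D where b: "b = (1,D)" and D: "D \<in> WW K T" "even (card D)" by blast
      from D(1) have fin: "finite D" and ev: "\<forall>x\<in>D. 0 < x \<and> even x" and sm: "K + sum id D = 2*T"
        unfolding WW_def by auto
      have "\<forall>x\<in>D. 1 < x \<and> (even x \<longleftrightarrow> odd (1::nat))"
      proof
        fix x assume "x \<in> D"
        with ev have "0 < x" "even x" by auto
        then have "x \<noteq> 1" "x \<noteq> 0" by auto
        then show "1 < x \<and> (even x \<longleftrightarrow> odd (1::nat))" using \<open>even x\<close> by simp
      qed
      moreover have "(K+1) * 1 + sum id D = 2*T+1" using sm by simp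
      ultimately have "(1,D) \<in> QQ (K+1) (2*T+1)" using fin by (simp add: QQ_mem)
      then show "b \<in> ?A" using b D(2) by simp
    qed
  qed
  then show ?thesis by (rule bij_betw_same_card)
qed

lemma bij4:
  shows "card {(s,D)\<in>QQ (K) (2*T). odd (card D) \<and> s = 1}
       = card {D \<in> WW K T. \<not> even (card D)}"
proof -
  let ?A = "{(s,D)\<in>QQ (K) (2*T). odd (card D) \<and> s = 1}"
  let ?B = "{D \<in> WW K T. \<not> even (card D)}"
  have "bij_betw snd ?A ?B"
  proof (rule bij_betw_byWitness[where f'="\<lambda>D. (1,D)"])
    show "\<forall>a\<in>?A. (1, snd a) = a"
    proof
      fix a assume "a \<in> ?A"
      then obtain s D where "a = (s,D)" "s = 1" by blast
      then show "(1, snd a) = a" by simp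
    qed
    show "\<forall>a\<in>?B. snd (1::nat, a) = a" by simp
    show "snd ` ?A \<subseteq> ?B"
    proof
      fix D assume "D \<in> snd ` ?A"
      then obtain s where m: "(s,D) \<in> QQ (K) (2*T)" "odd (card D)" "s = 1" by force
      then have "\<forall>x\<in>D. 0 < x \<and> even x" "finite D" "(K)*1 + sum id D = 2*T" unfolding QQ_mem by auto
      then show "D \<in> ?B" using m(2) by (simp add: WW_def)
    qed
    show "(\<lambda>D. (1,D)) ` ?B \<subseteq> ?A"
    proof
      fix b assume "b \<in> (\<lambda>D. (1::nat,D)) ` ?B"
      then obtain D where b: "b = (1,D)" and D: "D \<in> WW K T" "\<not> even (card D)" by blast
      from D(1) have fin: "finite D" and ev: "\<forall>x\<in>D. 0 < x \<and> even x" and sm: "K + sum id D = 2*T"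
        unfolding WW_def by auto
      have "\<forall>x\<in>D. 1 < x \<and> (even x \<longleftrightarrow> odd (1::nat))"
      proof
        fix x assume "x \<in> D"
        with ev have "0 < x" "even x" by auto
        then have "x \<noteq> 1" "x \<noteq> 0" by auto
        then show "1 < x \<and> (even x \<longleftrightarrow> odd (1::nat))" using \<open>even x\<close> by simp
      qed
      moreover have "(K) * 1 + sum id D = 2*T" using sm by simp
      ultimately have "(1,D) \<in> QQ (K) (2*T)" using fin by (simp add: QQ_mem)
      then show "b \<in> ?A" using b D(2) by simp
    qed
  qed
  then show ?thesis by (rule bij_betw_same_card)
qed

lemma QQ_zero: "j \<ge> 1 \<Longrightarrow> QQ j 0 = {}"
  by (auto simp: QQ_def)

lemma B1_eq:
  assumes "j \<ge> 1" shows "B1 j n = card {(s,D)\<in>QQ j (nat n). odd (card D)}"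
proof (cases "n \<le> 0")
  case True
  then have "nat n = 0" by simp
  then show ?thesis using True QQ_zero[OF assms] by (simp add: B1_def)
next
  case False
  then show ?thesis using spt_bij[OF assms, where R=odd and n="nat n"] by (simp add: B1_def)
qed

lemma pde_eq:
  assumes K: "K \<ge> 1" and k: "k = int K" and t: "t = int T"
  shows "p_de (2*t - k) = card (WW K T)"
proof (cases "2*t - k < 0")
  case True
  then have "WW K T = {}" using k t by (auto simp: WW_def)
  then show ?thesis using True by (simp add: p_de_def)
next
  case False
  then have KT: "K \<le> 2*T" and n: "nat (2*t - k) = 2*T - K" using k t by auto
  let ?A = "{p \<in> partitions (2*T - K). \<forall>x\<in>#p. even x \<and> count p x = 1}"
  have "bij_betw set_mset ?A (WW K T)"
  proof (rule bij_betw_byWitness[where f'=mset_set])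
    show "\<forall>a\<in>?A. mset_set (set_mset a) = a"
    proof
      fix p assume "p \<in> ?A"
      then have c: "\<forall>x\<in>#p. count p x = 1" by auto
      show "mset_set (set_mset p) = p"
      proof (rule multiset_eqI)
        fix x show "count (mset_set (set_mset p)) x = count p x"
          using c by (cases "x \<in># p") (auto simp: count_mset_set' count_eq_zero_iff)
      qed
    qed
    show "\<forall>a\<in>WW K T. set_mset (mset_set a) = a" by (auto simp: WW_def)
    show "set_mset ` ?A \<subseteq> WW K T"
    proof
      fix D assume "D \<in> set_mset ` ?A"
      then obtain p where p: "p \<in> ?A" and D: "D = set_mset p" by blast
      have c: "\<forall>x\<in>#p. count p x = 1" using p by auto
      have pe: "mset_set (set_mset p) = p"
      proof (rule multiset_eqI)
        fix x show "count (mset_set (set_mset p)) x = count p x"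
          using c by (cases "x \<in># p") (auto simp: count_mset_set' count_eq_zero_iff)
      qed
      have "sum id D = sum_mset p" using pe D sum_mset_mset_set by metis
      then have "sum id D = 2*T - K" using p by (simp add: partitions_def)
      then show "D \<in> WW K T" using p D KT by (auto simp: WW_def partitions_def)
    qed
    show "mset_set ` WW K T \<subseteq> ?A"
    proof
      fix p assume "p \<in> mset_set ` WW K T"
      then obtain D where p: "p = mset_set D" and D: "D \<in> WW K T" by blast
      from D have fin: "finite D" and ev: "\<forall>x\<in>D. 0 < x \<and> even x" and sm: "K + sum id D = 2*T"
        by (auto simp: WW_def)
      have "sum_mset p = 2*T - K" using p sm sum_mset_mset_set by simp
      then show "p \<in> ?A" using p fin ev by (auto simp: partitions_def)
    qed
  qed
  then have "card ?A = card (WW K T)" by (rule bij_betw_same_card)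
  then show ?thesis using False n by (simp add: p_de_def)
qed

lemma WW_finite: "finite (WW K T)"
proof (rule finite_subset)
  show "WW K T \<subseteq> Pow {..2*T}"
  proof
    fix D assume "D \<in> WW K T"
    then have fin: "finite D" and sm: "K + sum id D = 2*T" by (auto simp: WW_def)
    have "x \<le> 2*T" if "x \<in> D" for x
    proof -
      have "id x \<le> sum id D" by (rule member_le_sum) (use that fin in auto)
      then show ?thesis using sm by simp
    qed
    then show "D \<in> Pow {..2*T}" by auto
  qed
qed simp

lemma main_nat:
  assumes K: "K \<ge> 1"
  shows "card {(s,D)\<in>QQ (K+1) (2*T+1). even (card D)} + card {(s,D)\<in>QQ K (2*T). odd (card D)}
       = card {(s,D)\<in>QQ K (2*T-2*K). odd (card D)} + card (WW K T)"
proof -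
  let ?X = "{(s,D)\<in>QQ (K+1) (2*T+1). even (card D)}"
  let ?Y = "{(s,D)\<in>QQ K (2*T). odd (card D)}"
  let ?Z = "{(s,D)\<in>QQ K (2*T-2*K). odd (card D)}"
  have fX: "finite ?X" using QQ_finite[of "K+1" "2*T+1"] by (auto intro: finite_subset)
  have fY: "finite ?Y" using QQ_finite[OF K, of "2*T"] by (auto intro: finite_subset)
  have fZ: "finite ?Z" using QQ_finite[OF K, of "2*T-2*K"] by (auto intro: finite_subset)
  have "card ?X = card {a\<in>?X. fst a \<noteq> 1} + card {a\<in>?X. \<not> fst a \<noteq> 1}" by (rule card_split[OF fX])
  also have "{a\<in>?X. fst a \<noteq> 1} = {(s,D)\<in>QQ (K+1) (2*T+1). even (card D) \<and> s \<noteq> 1}" by auto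
  also have "{a\<in>?X. \<not> fst a \<noteq> 1} = {(s,D)\<in>QQ (K+1) (2*T+1). even (card D) \<and> s = 1}" by auto
  finally have cX: "card ?X = card {(s,D)\<in>QQ K (2*T-2*K). odd (card D) \<and> s+1 \<in> D}
       + card {D \<in> WW K T. even (card D)}" using bij1[OF K] bij3 by simp
  have "card ?Y = card {a\<in>?Y. fst a \<noteq> 1} + card {a\<in>?Y. \<not> fst a \<noteq> 1}" by (rule card_split[OF fY])
  also have "{a\<in>?Y. fst a \<noteq> 1} = {(s,D)\<in>QQ K (2*T). odd (card D) \<and> s \<noteq> 1}" by auto
  also have "{a\<in>?Y. \<not> fst a \<noteq> 1} = {(s,D)\<in>QQ K (2*T). odd (card D) \<and> s = 1}" by auto
  finally have cY: "card ?Y = card {(s,D)\<in>QQ K (2*T-2*K). odd (card D) \<and> s+1 \<notin> D}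
       + card {D \<in> WW K T. \<not> even (card D)}" using bij2[OF K] bij4 by simp
  have "card ?Z = card {a\<in>?Z. fst a + 1 \<in> snd a} + card {a\<in>?Z. \<not> fst a + 1 \<in> snd a}" by (rule card_split[OF fZ])
  also have "{a\<in>?Z. fst a + 1 \<in> snd a} = {(s,D)\<in>QQ K (2*T-2*K). odd (card D) \<and> s+1 \<in> D}" by auto
  also have "{a\<in>?Z. \<not> fst a + 1 \<in> snd a} = {(s,D)\<in>QQ K (2*T-2*K). odd (card D) \<and> s+1 \<notin> D}" by auto
  finally have cZ: "card ?Z = card {(s,D)\<in>QQ K (2*T-2*K). odd (card D) \<and> s+1 \<in> D}
      + card {(s,D)\<in>QQ K (2*T-2*K). odd (card D) \<and> s+1 \<notin> D}" .
  have cW: "card (WW K T) = card {D \<in> WW K T. even (card D)} + card {D \<in> WW K T. \<not> even (card D)}"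
    by (rule card_split[OF WW_finite])
  show ?thesis using cX cY cZ cW by simp
qed

theorem lemma1:
  fixes k t :: int
  assumes "k \<ge> 1" and "t \<ge> 1"
  shows "int (B0 (nat (k + 1)) (2*t + 1)) + int (B1 (nat k) (2*t))
       = int (B1 (nat k) (2*t - 2*k)) + int (p_de (2*t - k))"
proof -
  define K where "K = nat k"
  define T where "T = nat t"
  have K1: "K \<ge> 1" and k: "k = int K" and t: "t = int T" using assms by (auto simp: K_def T_def)
  have b0: "B0 (nat (k + 1)) (2*t + 1) = card {(s,D)\<in>QQ (K+1) (2*T+1). even (card D)}"
  proof -
    have "nat (k+1) = K+1" "nat (2*t+1) = 2*T+1" using k t by auto
    moreover have "\<not> 2*t+1 \<le> 0" using assms by simp
    ultimately show ?thesis using spt_bij[where j="K+1" and R=even and n="2*T+1"] by (simp add: B0_def)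
  qed
  have b1: "B1 (nat k) (2*t) = card {(s,D)\<in>QQ K (2*T). odd (card D)}"
    using B1_eq[OF K1, of "2*t"] t K_def by (simp add: nat_mult_distrib)
  have b2: "B1 (nat k) (2*t - 2*k) = card {(s,D)\<in>QQ K (2*T-2*K). odd (card D)}"
  proof -
    have "nat (2*t - 2*k) = 2*T - 2*K" using k t by auto
    then show ?thesis using B1_eq[OF K1, of "2*t - 2*k"] K_def by simp
  qed
  have p: "p_de (2*t - k) = card (WW K T)" by (rule pde_eq[OF K1 k t])
  show ?thesis using main_nat[OF K1, of T] b0 b1 b2 p
    by (metis of_nat_add)
qed

end
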